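(* The tropicalization $\operatorname{trop}(\mathrm{PM}^+_n(\mathbb{R}))\subseteq\mathbb{R}^{2^{[n]}}$ of the image of the cone of $n\times n$ real symmetric positive definite matrices under the principal minor map is contained in the set of $M^\natural$-concave functions $2^{[n]}\to\mathbb{R}$.
   Context: $\mathrm{PM}^+_n(\mathbb{R})=\{(A_S)_{S\subseteq[n]} : A \text{ real symmetric positive definite } n\times n\}\subseteq\mathbb{R}_{+}^{2^{[n]}}$, where $A_S$ is the principal minor on rows/columns $S$ ($A_\emptyset=1$). For $\mathcal{S}\subseteq\mathbb{R}_+^N$, $\operatorname{trop}(\mathcal{S})=\lim_{t\to\infty}\{(\log_t x_1,\dots,\log_t x_N): x\in\mathcal{S}\}$ (logarithmic limit set). Vectors in $\mathbb{R}^{2^{[n]}}$ are regarded as functions $F:2^{[n]}\to\mathbb{R}$. $F$ is $M^\natural$-concave if for all $S,T\subseteq[n]$ and all $i\in S\setminus T$, either $F(S)+F(T)\le F(S\setminus\{i\})+F(T\cup\{i\})$, or there exists $j\in T\setminus S$ with $F(S)+F(T)\le F((S\setminus\{i\})\cup\{j\})+F((T\setminus\{j\})\cup\{i\})$. *)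

theory Defs
  imports "HOL-Analysis.Analysis"
begin

text \<open>The ground set [n] is modelled by a finite type 'n; real n x n matrices are
  real^'n^'n; points of R^(2^[n]) are functions 'n set => real.\<close>

definition pos_def_sym :: "real^'n^'n \<Rightarrow> bool" where
  "pos_def_sym A \<longleftrightarrow> transpose A = A \<and> (\<forall>x. x \<noteq> 0 \<longrightarrow> x \<bullet> (A *v x) > 0)"

text \<open>Principal minor A_S: determinant of the submatrix on rows/columns S
  (Leibniz formula over permutations of S, as for det in the library); A_{} = 1.\<close>
definition principal_minor :: "real^'n^'n \<Rightarrow> 'n set \<Rightarrow> real" where
  "principal_minor A S =
     (\<Sum>p \<in> {p. p permutes S}. of_int (sign p) * (\<Prod>i\<in>S. A $ i $ p i))"

definition PM_plus :: "('n::finite set \<Rightarrow> real) set" where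
  "PM_plus = {(\<lambda>S. principal_minor A S) | A. pos_def_sym A}"

text \<open>Logarithmic limit set: the (upper Kuratowski) limit of log_t(X) as t \<rightarrow> \<infinity>,
  i.e. the points w such that for every eps > 0 and every bound T there is t > T and
  x \<in> X with log_t x within eps of w (sup-norm on the finitely many coordinates).\<close>
definition trop :: "('a::finite \<Rightarrow> real) set \<Rightarrow> ('a \<Rightarrow> real) set" where
  "trop X = {w. \<forall>\<epsilon>>0. \<forall>T. \<exists>t>T. \<exists>x\<in>X. \<forall>a. \<bar>log t (x a) - w a\<bar> < \<epsilon>}"

definition M_natural_concave :: "('n set \<Rightarrow> real) \<Rightarrow> bool" where
  "M_natural_concave F \<longleftrightarrow>
     (\<forall>S T. \<forall>i \<in> S - T.
        F S + F T \<le> F (S - {i}) + F (T \<union> {i}) \<or>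
        (\<exists>j \<in> T - S. F S + F T \<le> F ((S - {i}) \<union> {j}) + F ((T - {j}) \<union> {i})))"

end

theory Submission
  imports Defs
begin

definition ext :: "real^'n^'n \<Rightarrow> 'n set \<Rightarrow> real^'n^'n" where
  "ext A X = (\<chi> k l. if k \<in> X \<and> l \<in> X then A$k$l else if k = l then 1 else 0)"

lemma pm_det: "principal_minor A X = det (ext A (X::'n::finite set))"
proof -
  have "det (ext A X) = (\<Sum>p\<in>{p. p permutes (UNIV::'n set)}. of_int (sign p) * (\<Prod>i\<in>UNIV. ext A X $ i $ p i))"
    by (simp add: det_def)
  also have "\<dots> = (\<Sum>p\<in>{p. p permutes X}. of_int (sign p) * (\<Prod>i\<in>UNIV. ext A X $ i $ p i))"
  proof (rule sum.mono_neutral_right)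
    show "finite {p. p permutes (UNIV::'n set)}" by (simp add: finite_permutations)
    show "{p. p permutes X} \<subseteq> {p. p permutes (UNIV::'n set)}"
      using permutes_subset by blast
    show "\<forall>p\<in>{p. p permutes UNIV} - {p. p permutes X}. of_int (sign p) * (\<Prod>i\<in>UNIV. ext A X $ i $ p i) = 0"
    proof
      fix p assume p: "p \<in> {p. p permutes (UNIV::'n set)} - {p. p permutes X}"
      then have pu: "p permutes UNIV" and npx: "\<not> p permutes X" by auto
      have "\<exists>k. k \<notin> X \<and> p k \<noteq> k"
        using npx pu unfolding permutes_def by blast
      then obtain k where k: "k \<notin> X" "p k \<noteq> k" by blast
      have "ext A X $ k $ p k = 0" using k by (simp add: ext_def)
      then show "of_int (sign p) * (\<Prod>i\<in>UNIV. ext A X $ i $ p i) = 0"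
        by (simp add: prod_zero_iff) (metis)
    qed
  qed
  also have "\<dots> = (\<Sum>p\<in>{p. p permutes X}. of_int (sign p) * (\<Prod>i\<in>X. A $ i $ p i))"
  proof (rule sum.cong[OF refl])
    fix p assume "p \<in> {p. p permutes X}"
    then have p: "p permutes X" by simp
    have "(\<Prod>i\<in>UNIV. ext A X $ i $ p i) = (\<Prod>i\<in>X. ext A X $ i $ p i)"
    proof (rule prod.mono_neutral_right)
      show "\<forall>i\<in>UNIV - X. ext A X $ i $ p i = 1"
        using p by (auto simp: ext_def permutes_not_in)
    qed auto
    also have "\<dots> = (\<Prod>i\<in>X. A $ i $ p i)"
      using p by (intro prod.cong) (auto simp: ext_def permutes_in_image)
    finally show "of_int (sign p) * (\<Prod>i\<in>UNIV. ext A X $ i $ p i) = of_int (sign p) * (\<Prod>i\<in>X. A $ i $ p i)"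
      by simp
  qed
  finally show ?thesis by (simp add: principal_minor_def)
qed

definition B :: "real^'n^'n \<Rightarrow> real^'n \<Rightarrow> real^'n \<Rightarrow> real" where
  "B A x y = x \<bullet> (A *v y)"

abbreviation q :: "real^'n^'n \<Rightarrow> real^'n \<Rightarrow> real" where
  "q A x \<equiv> B A x x"

definition SupS :: "'n set \<Rightarrow> (real^'n) set" where
  "SupS X = {y. \<forall>k. k \<notin> X \<longrightarrow> y$k = 0}"

lemma B_add_left: "B A (x + y) z = B A x z + B A y z"
  by (simp add: B_def inner_add_left)
lemma B_add_right: "B A z (x + y) = B A z x + B A z y"
  by (simp add: B_def inner_add_right matrix_vector_right_distrib)
lemma B_diff_left: "B A (x - y) z = B A x z - B A y z"
  by (simp add: B_def inner_diff_left)
lemma B_diff_right: "B A z (x - y) = B A z x - B A z y"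
  by (simp add: B_def inner_diff_right matrix_vector_mult_diff_distrib)
lemma B_scale_left: "B A (c *\<^sub>R x) z = c * B A x z"
  by (simp add: B_def)
lemma B_scale_right: "B A z (c *\<^sub>R x) = c * B A z x"
  by (simp add: B_def matrix_vector_mult_scaleR)
lemma B_zero_left[simp]: "B A 0 z = 0" by (simp add: B_def)
lemma B_zero_right[simp]: "B A z 0 = 0" by (simp add: B_def)
lemma B_sum_left: "B A (\<Sum>k\<in>K. f k) z = (\<Sum>k\<in>K. B A (f k) z)"
  by (simp add: B_def inner_sum_left)
lemma B_neg_left: "B A (- x) z = - B A x z" by (simp add: B_def)
lemma B_neg_right: "B A z (- x) = - B A z x" by (metis B_diff_right B_zero_right diff_0)

lemmas B_lin = B_add_left B_add_right B_diff_left B_diff_right B_scale_left B_scale_right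
  B_neg_left B_neg_right

lemma B_sym: assumes "pos_def_sym A" shows "B A x y = B A y x"
proof -
  have tA: "transpose A = A" using assms by (simp add: pos_def_sym_def)
  have "B A x y = (x v* A) \<bullet> y" by (simp add: B_def dot_lmul_matrix)
  also have "x v* A = transpose A *v x"
    by (metis transpose_transpose vector_transpose_matrix)
  finally show ?thesis using tA by (simp add: B_def inner_commute)
qed

lemma q_pos: assumes "pos_def_sym A" "x \<noteq> 0" shows "q A x > 0"
  using assms by (simp add: pos_def_sym_def B_def)

lemma q_nonneg: assumes "pos_def_sym A" shows "q A x \<ge> 0"
  using q_pos[OF assms, of x] by (cases "x = 0") auto

lemma SupS_add: "x \<in> SupS X \<Longrightarrow> y \<in> SupS X \<Longrightarrow> x + y \<in> SupS X"
  by (simp add: SupS_def)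
lemma SupS_diff: "x \<in> SupS X \<Longrightarrow> y \<in> SupS X \<Longrightarrow> x - y \<in> SupS X"
  by (simp add: SupS_def)
lemma SupS_scale: "x \<in> SupS X \<Longrightarrow> c *\<^sub>R x \<in> SupS X"
  by (simp add: SupS_def)
lemma SupS_zero: "0 \<in> SupS X" by (simp add: SupS_def)
lemma SupS_axis: "k \<in> X \<Longrightarrow> axis k c \<in> SupS X"
  by (simp add: SupS_def axis_def)
lemma SupS_mono: "X \<subseteq> Y \<Longrightarrow> x \<in> SupS X \<Longrightarrow> x \<in> SupS Y"
  by (auto simp: SupS_def)
lemma SupS_sum: "(\<And>k. k \<in> K \<Longrightarrow> f k \<in> SupS X) \<Longrightarrow> (\<Sum>k\<in>K. f k) \<in> SupS X"
  by (induction K rule: infinite_finite_induct) (auto simp: SupS_zero SupS_add)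

lemma SupS_insert_decomp:
  assumes "w \<in> SupS (insert k X)"
  shows "w - axis k (w$k) \<in> SupS X"
  using assms by (auto simp: SupS_def axis_def)

lemma proj_exists:
  fixes A :: "real^'n^'n" and X :: "'n set"
  assumes A: "pos_def_sym A" and fin: "finite X"
  shows "\<exists>p\<in>SupS X. \<forall>w\<in>SupS X. B A w (v - p) = 0"
  using fin
proof (induction X arbitrary: v rule: finite_induct)
  case empty
  have "\<forall>w\<in>SupS ({}::'n set). B A w (v - 0) = 0"
  proof
    fix w :: "real^'n" assume "w \<in> SupS ({}::'n set)"
    then have "w = 0" by (simp add: SupS_def vec_eq_iff)
    then show "B A w (v - 0) = 0" by simp
  qed
  then show ?case using SupS_zero by blast
next
  case (insert k X)
  obtain pv where pv: "pv \<in> SupS X" "\<forall>w\<in>SupS X. B A w (v - pv) = 0"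
    using insert.IH by blast
  obtain pe where pe: "pe \<in> SupS X" "\<forall>w\<in>SupS X. B A w (axis k 1 - pe) = 0"
    using insert.IH by blast
  define r' where "r' = axis k (1::real) - pe"
  define rv where "rv = v - pv"
  have "r' $ k = 1" using pe(1) insert.hyps(2) by (simp add: r'_def SupS_def axis_def)
  then have "r' \<noteq> 0" by auto
  then have qr: "q A r' > 0" using q_pos[OF A] by blast
  define c where "c = B A r' rv / q A r'"
  define p where "p = pv + c *\<^sub>R r'"
  have r'S: "r' \<in> SupS (insert k X)"
    unfolding r'_def using SupS_mono[OF _ pe(1), of "insert k X"] by (intro SupS_diff SupS_axis) auto
  have pS: "p \<in> SupS (insert k X)"
    unfolding p_def using SupS_mono[OF _ pv(1), of "insert k X"] r'S by (intro SupS_add SupS_scale) auto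
  have vp: "v - p = rv - c *\<^sub>R r'" by (simp add: p_def rv_def)
  have orthX: "B A w (v - p) = 0" if "w \<in> SupS X" for w
  proof -
    have "B A w (v - p) = B A w rv - c * B A w r'" by (simp only: vp B_diff_right B_scale_right)
    then show ?thesis using pv(2) pe(2) that unfolding rv_def r'_def by simp
  qed
  have orthk: "B A (axis k 1) (v - p) = 0"
  proof -
    have "axis k 1 = r' + pe" by (simp add: r'_def)
    then have "B A (axis k 1) (v - p) = B A r' (v - p) + B A pe (v - p)"
      by (simp add: B_add_left)
    also have "B A pe (v - p) = 0" using orthX pe(1) by blast
    also have "B A r' (v - p) = B A r' rv - c * q A r'" by (simp only: vp B_diff_right B_scale_right)
    also have "\<dots> = 0" using qr by (simp add: c_def)
    finally show ?thesis by simp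
  qed
  have "\<forall>w\<in>SupS (insert k X). B A w (v - p) = 0"
  proof
    fix w assume w: "w \<in> SupS (insert k X)"
    have "w = (w - axis k (w$k)) + (w$k) *\<^sub>R axis k 1"
      by (simp add: vec_eq_iff axis_def)
    then have "B A w (v - p) = B A (w - axis k (w$k)) (v - p) + (w$k) * B A (axis k 1) (v - p)"
      by (metis B_add_left B_scale_left)
    then show "B A w (v - p) = 0"
      using orthX[OF SupS_insert_decomp[OF w]] orthk by simp
  qed
  then show ?case using pS by blast
qed

definition delta :: "real^'n^'n \<Rightarrow> real^'n \<Rightarrow> 'n set \<Rightarrow> real" where
  "delta A v X = Inf {q A (v - y) | y. y \<in> SupS X}"

lemma delta_char:
  assumes A: "pos_def_sym A" and p: "p \<in> SupS X" and orth: "\<forall>w\<in>SupS X. B A w (v - p) = 0"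
  shows "delta A v X = q A (v - p)" and "\<And>y. y \<in> SupS X \<Longrightarrow> q A (v - p) \<le> q A (v - y)"
proof -
  have min: "q A (v - p) \<le> q A (v - y)" if y: "y \<in> SupS X" for y
  proof -
    have py: "p - y \<in> SupS X" using p y by (rule SupS_diff)
    have "v - y = (v - p) + (p - y)" by simp
    then have "q A (v - y) = q A (v - p) + B A (v - p) (p - y) + B A (p - y) (v - p) + q A (p - y)"
      by (simp only: B_add_left B_add_right)
    moreover have "B A (p - y) (v - p) = 0" using orth py by blast
    moreover have "B A (v - p) (p - y) = 0" using orth py B_sym[OF A] by metis
    moreover have "q A (p - y) \<ge> 0" using q_nonneg[OF A] .
    ultimately show ?thesis by simp
  qed
  then show "\<And>y. y \<in> SupS X \<Longrightarrow> q A (v - p) \<le> q A (v - y)" by blast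
  show "delta A v X = q A (v - p)"
    unfolding delta_def
    by (rule cInf_eq_minimum) (use p min in auto)
qed

lemma delta_le:
  fixes A :: "real^'n^'n" and X :: "'n set"
  assumes A: "pos_def_sym A" and y: "y \<in> SupS X"
  shows "delta A v X \<le> q A (v - y)"
proof -
  obtain p where p: "p \<in> SupS X" "\<forall>w\<in>SupS X. B A w (v - p) = 0"
    using proj_exists[OF A finite] by blast
  show ?thesis using delta_char[OF A p] y by simp
qed

lemma delta_nonneg:
  fixes A :: "real^'n^'n" and X :: "'n set"
  assumes A: "pos_def_sym A"
  shows "delta A v X \<ge> 0"
proof -
  obtain p where p: "p \<in> SupS X" "\<forall>w\<in>SupS X. B A w (v - p) = 0"
    using proj_exists[OF A finite] by blast
  show ?thesis using delta_char[OF A p] q_nonneg[OF A] by simp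
qed

lemma delta_pos:
  fixes A :: "real^'n^'n" and X :: "'n set"
  assumes A: "pos_def_sym A" and i: "i \<notin> X"
  shows "delta A (axis i 1) X > 0"
proof -
  obtain p where p: "p \<in> SupS X" "\<forall>w\<in>SupS X. B A w (axis i 1 - p) = 0"
    using proj_exists[OF A finite] by blast
  have "(axis i 1 - p) $ i = 1" using p(1) i by (simp add: SupS_def axis_def)
  then have "axis i 1 - p \<noteq> 0" by auto
  then show ?thesis using delta_char[OF A p] q_pos[OF A] by simp
qed

lemma det_row_axis:
  fixes M N :: "real^'n^'n"
  assumes M: "M $ i = axis i 1" and N: "N $ i = axis i 1"
    and eq: "\<And>k l. l \<noteq> i \<Longrightarrow> N$k$l = M$k$l"
  shows "det N = det M"
  unfolding det_def
proof (rule sum.cong[OF refl])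
  fix p assume "p \<in> {p. p permutes (UNIV::'n set)}"
  then have p: "p permutes (UNIV::'n set)" by simp
  show "of_int (sign p) * (\<Prod>k\<in>UNIV. N $ k $ p k) = of_int (sign p) * (\<Prod>k\<in>UNIV. M $ k $ p k)"
  proof (cases "p i = i")
    case True
    have "(\<Prod>k\<in>UNIV. N $ k $ p k) = (\<Prod>k\<in>UNIV. M $ k $ p k)"
    proof (rule prod.cong[OF refl])
      fix k
      show "N $ k $ p k = M $ k $ p k"
      proof (cases "k = i")
        case True then show ?thesis using M N \<open>p i = i\<close> by simp
      next
        case False
        then have "p k \<noteq> p i" using permutes_inj[OF p] by (auto dest: injD)
        then have "p k \<noteq> i" using True by simp
        then show ?thesis using eq by simp
      qed
    qed
    then show ?thesis by simp
  next
    case False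
    have "N $ i $ p i = 0" "M $ i $ p i = 0" using M N False by (auto simp: axis_def)
    then have "(\<Prod>k\<in>UNIV. N $ k $ p k) = 0" "(\<Prod>k\<in>UNIV. M $ k $ p k) = 0"
      by (auto intro!: prod_zero)
    then show ?thesis by (simp only: mult_zero_right)
  qed
qed

lemma A_sym_entry: assumes "pos_def_sym A" shows "A $ k $ l = A $ l $ k"
proof -
  have "transpose A = A" using assms by (simp add: pos_def_sym_def)
  then have "transpose A $ k $ l = A $ k $ l" by simp
  then show ?thesis by (simp add: transpose_def)
qed

lemma B_axis: "B A (axis l 1) r = (A *v r) $ l"
  by (simp add: B_def inner_axis')

lemma sum_SupS:
  fixes p :: "real^'n"
  assumes "p \<in> SupS X"
  shows "(\<Sum>m\<in>UNIV. f m * p $ m) = (\<Sum>m\<in>X. f m * p $ m)"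
  using assms by (intro sum.mono_neutral_right) (auto simp: SupS_def)

lemma pm_insert:
  fixes A :: "real^'n^'n" and X :: "'n set"
  assumes A: "pos_def_sym A" and i: "i \<notin> X"
  shows "principal_minor A (insert i X) = principal_minor A X * delta A (axis i 1) X"
proof -
  obtain p where p: "p \<in> SupS X" "\<forall>w\<in>SupS X. B A w (axis i 1 - p) = 0"
    using proj_exists[OF A finite] by blast
  define r where "r = axis i 1 - p"
  have dl: "delta A (axis i 1) X = q A r" using delta_char(1)[OF A p] by (simp add: r_def)
  define M where "M = ext A (insert i X)"
  define x where "x = - (\<Sum>k\<in>X. p$k *s row k M)"
  have xspan: "x \<in> vec.span {row j M |j. j \<noteq> i}"
    unfolding x_def
    by (intro vec.span_neg vec.span_sum vec.span_scale vec.span_base) (use i in auto)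
  have Ar: "(A *v r) $ l = A$i$l - (\<Sum>k\<in>X. p$k * A$k$l)" for l
  proof -
    have "(A *v r) $ l = (\<Sum>m\<in>UNIV. A$l$m * (axis i 1 - p)$m)"
      by (simp add: matrix_vector_mult_def r_def)
    also have "\<dots> = (\<Sum>m\<in>UNIV. A$l$m * axis i 1 $ m) - (\<Sum>m\<in>UNIV. A$l$m * p$m)"
      by (simp add: algebra_simps sum_subtractf)
    also have "(\<Sum>m\<in>UNIV. A$l$m * axis i 1 $ m) = (\<Sum>m\<in>UNIV. if m = i then A$l$m else 0)"
      by (intro sum.cong) (auto simp: axis_def)
    also have "\<dots> = A$l$i" by (simp add: sum.delta)
    also have "(\<Sum>m\<in>UNIV. A$l$m * p$m) = (\<Sum>m\<in>X. A$l$m * p$m)"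
      by (rule sum_SupS[OF p(1)])
    finally show ?thesis using A_sym_entry[OF A] by (simp add: mult.commute)
  qed
  have rowi: "row i M + x = q A r *s axis i 1"
  proof (rule vec_eq_iff[THEN iffD2, rule_format])
    fix l
    have "(row i M + x) $ l = M$i$l - (\<Sum>k\<in>X. p$k * M$k$l)"
      by (simp add: x_def row_def sum_component)
    also have "\<dots> = (q A r *s axis i 1) $ l"
    proof (cases "l \<in> insert i X")
      case True
      then have "M$i$l - (\<Sum>k\<in>X. p$k * M$k$l) = (A *v r) $ l"
        unfolding Ar M_def ext_def by (auto intro!: sum.cong)
      also have "\<dots> = B A (axis l 1) r" by (simp add: B_axis)
      also have "\<dots> = (q A r *s axis i 1) $ l"
      proof (cases "l = i")
        case True
        have "B A (axis i 1) r = B A (r + p) r" by (simp add: r_def)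
        also have "\<dots> = q A r + B A p r" by (simp add: B_add_left)
        also have "B A p r = 0" using p r_def by blast
        finally show ?thesis using True by (simp add: axis_def)
      next
        case False
        then have "l \<in> X" using \<open>l \<in> insert i X\<close> by simp
        then have "B A (axis l 1) r = 0" using p SupS_axis r_def by blast
        then show ?thesis using False by (simp add: axis_def)
      qed
      finally show ?thesis .
    next
      case False
      then show ?thesis using i by (auto simp: M_def ext_def axis_def intro!: sum.neutral)
    qed
    finally show "(row i M + x) $ l = (q A r *s axis i 1) $ l" .
  qed
  have "det M = det (\<chi> k. if k = i then row i M + x else row k M)"
    using det_row_span[OF xspan] by simp
  also have "\<dots> = det (\<chi> k. if k = i then q A r *s axis i 1 else row k M)"
    by (simp only: rowi)
  also have "\<dots> = q A r * det (\<chi> k. if k = i then axis i 1 else row k M)"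
    by (rule det_row_mul)
  also have "det (\<chi> k. if k = i then axis i 1 else row k M) = det (ext A X)"
    by (rule det_row_axis) (use i in \<open>auto simp: ext_def axis_def M_def row_def vec_eq_iff\<close>)
  finally show ?thesis using dl by (simp add: pm_det M_def mult.commute)
qed

lemma pm_pos:
  fixes A :: "real^'n^'n" and X :: "'n set"
  assumes A: "pos_def_sym A"
  shows "principal_minor A X > 0"
proof -
  have "finite X" by simp
  then show ?thesis
  proof (induction X rule: finite_induct)
    case empty
    have "ext A {} = mat 1" by (simp add: ext_def mat_def vec_eq_iff)
    then show ?case by (simp add: pm_det)
  next
    case (insert i X)
    then show ?case using pm_insert[OF A insert.hyps(2)] delta_pos[OF A insert.hyps(2)] by simp
  qed
qed

lemma q_add_le:
  assumes A: "pos_def_sym A"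
  shows "q A (a + b) \<le> 2 * q A a + 2 * q A b"
proof -
  have e1: "q A (a + b) = q A a + B A a b + B A b a + q A b"
    by (simp add: B_add_left B_add_right)
  have e2: "q A (a - b) = q A a - B A a b - B A b a + q A b"
    by (simp add: B_diff_left B_diff_right)
  have "q A (a - b) \<ge> 0" by (rule q_nonneg[OF A])
  then show ?thesis using e1 e2 q_nonneg[OF A, of a] q_nonneg[OF A, of b] by linarith
qed

lemma q_scale: "q A (c *\<^sub>R x) = c^2 * q A x"
  by (simp add: B_scale_left B_scale_right power2_eq_square)

lemma q_sum_le:
  assumes A: "pos_def_sym A" and fin: "finite K"
  shows "q A ((\<Sum>k\<in>K. u k) + w) \<le> 2 ^ card K * ((\<Sum>k\<in>K. q A (u k)) + q A w)"
  using fin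
proof (induction K arbitrary: w rule: finite_induct)
  case empty
  then show ?case by simp
next
  case (insert k K)
  have "(\<Sum>k\<in>insert k K. u k) + w = u k + ((\<Sum>k\<in>K. u k) + w)"
    using insert.hyps by (simp add: algebra_simps)
  then have "q A ((\<Sum>k\<in>insert k K. u k) + w) \<le> 2 * q A (u k) + 2 * q A ((\<Sum>k\<in>K. u k) + w)"
    using q_add_le[OF A] by metis
  also have "\<dots> \<le> 2 * q A (u k) + 2 * (2 ^ card K * ((\<Sum>k\<in>K. q A (u k)) + q A w))"
    using insert.IH by simp
  also have "\<dots> \<le> 2 ^ card (insert k K) * ((\<Sum>k\<in>insert k K. q A (u k)) + q A w)"
  proof -
    have "(1::real) \<le> 2 ^ card K" by simp
    then have "2 * q A (u k) \<le> 2 * 2 ^ card K * q A (u k)"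
      using q_nonneg[OF A, of "u k"] by (simp add: mult_right_mono)
    then show ?thesis using insert.hyps by (simp add: algebra_simps)
  qed
  finally show ?case .
qed

lemma SupS_repr:
  fixes p :: "real^'n"
  assumes "p \<in> SupS T"
  shows "p = (\<Sum>t\<in>T. p$t *\<^sub>R axis t 1)"
proof (rule vec_eq_iff[THEN iffD2, rule_format])
  fix l
  have "(\<Sum>t\<in>T. p$t *\<^sub>R axis t (1::real)) $ l = (\<Sum>t\<in>T. if t = l then p$t else 0)"
  proof -
    have "(\<Sum>t\<in>T. p$t *\<^sub>R axis t (1::real)) $ l = (\<Sum>t\<in>T. p$t * (axis t (1::real)) $ l)"
      by (simp add: sum_component)
    also have "\<dots> = (\<Sum>t\<in>T. if t = l then p$t else 0)"
      by (intro sum.cong) (auto simp: axis_def)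
    finally show ?thesis .
  qed
  also have "\<dots> = p $ l" using assms by (simp add: sum.delta' SupS_def)
  finally show "p $ l = (\<Sum>t\<in>T. p$t *\<^sub>R axis t 1) $ l" by simp
qed

lemma claim2:
  fixes A :: "real^'n^'n" and T :: "'n set"
  assumes A: "pos_def_sym A" and p: "p \<in> SupS T" and orth: "\<forall>w\<in>SupS T. B A w (axis i 1 - p) = 0"
    and j: "j \<in> T"
  shows "(p$j)^2 * delta A (axis j 1) (T - {j}) \<le> delta A (axis i 1) (T - {j})"
proof -
  obtain y where y: "y \<in> SupS (T - {j})" "\<forall>w\<in>SupS (T - {j}). B A w (axis i 1 - y) = 0"
    using proj_exists[OF A finite] by blast
  have dy: "delta A (axis i 1) (T - {j}) = q A (axis i 1 - y)" using delta_char(1)[OF A y] .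
  define r where "r = axis i 1 - p"
  define u where "u = p - y"
  have yT: "y \<in> SupS T" using SupS_mono[OF _ y(1)] by blast
  have uT: "u \<in> SupS T" unfolding u_def using p yT by (rule SupS_diff)
  have "axis i 1 - y = u + r" by (simp add: u_def r_def)
  then have "q A (axis i 1 - y) = q A u + B A u r + B A r u + q A r"
    by (simp add: B_add_left B_add_right)
  moreover have "B A u r = 0" using orth uT r_def by blast
  moreover have "B A r u = 0" using \<open>B A u r = 0\<close> B_sym[OF A] by metis
  moreover have "q A r \<ge> 0" by (rule q_nonneg[OF A])
  ultimately have qu: "q A u \<le> delta A (axis i 1) (T - {j})" using dy by simp
  define c where "c = p$j"
  show ?thesis
  proof (cases "c = 0")
    case True
    then show ?thesis using delta_nonneg[OF A] qu q_nonneg[OF A, of u] by (simp add: c_def)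
  next
    case False
    define w' where "w' = (1/c) *\<^sub>R (c *\<^sub>R axis j 1 - u)"
    have "w' \<in> SupS (T - {j})"
      using uT y(1) j by (auto simp: w'_def SupS_def axis_def u_def c_def)
    then have "delta A (axis j 1) (T - {j}) \<le> q A (axis j 1 - w')" by (rule delta_le[OF A])
    also have "axis j 1 - w' = (1/c) *\<^sub>R u" using False by (simp add: w'_def algebra_simps)
    also have "q A ((1/c) *\<^sub>R u) = q A u / c^2" by (simp add: q_scale power2_eq_square)
    finally have "c^2 * delta A (axis j 1) (T - {j}) \<le> q A u"
      using False by (simp add: field_simps)
    then show ?thesis using qu by (simp add: c_def)
  qed
qed

lemma claim1:
  fixes A :: "real^'n^'n" and T S0 :: "'n set"
  assumes A: "pos_def_sym A" and p: "p \<in> SupS T" and orth: "\<forall>w\<in>SupS T. B A w (axis i 1 - p) = 0"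
  shows "delta A (axis i 1) S0 \<le> 2 ^ card (T - S0) *
           ((\<Sum>j\<in>T - S0. (p$j)^2 * delta A (axis j 1) S0) + delta A (axis i 1) T)"
proof -
  have "\<forall>j. \<exists>pj. pj \<in> SupS S0 \<and> (\<forall>w\<in>SupS S0. B A w (axis j 1 - pj) = 0)"
    using proj_exists[OF A finite] by blast
  then obtain P where P: "\<And>j. P j \<in> SupS S0" "\<And>j. \<forall>w\<in>SupS S0. B A w (axis j 1 - P j) = 0"
    by metis
  define r where "r = axis i 1 - p"
  obtain pr where pr: "pr \<in> SupS S0" "\<forall>w\<in>SupS S0. B A w (r - pr) = 0"
    using proj_exists[OF A finite] by blast
  have dj: "delta A (axis j 1) S0 = q A (axis j 1 - P j)" for j
    using delta_char(1)[OF A P(1) P(2)] .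
  have dr: "q A (r - pr) \<le> q A (r - 0)" using delta_char(2)[OF A pr SupS_zero] .
  have dT: "delta A (axis i 1) T = q A r" using delta_char(1)[OF A p orth] by (simp add: r_def)
  define y where "y = (\<Sum>t\<in>T \<inter> S0. p$t *\<^sub>R axis t 1) + (\<Sum>j\<in>T - S0. p$j *\<^sub>R P j) + pr"
  have yS: "y \<in> SupS S0"
    unfolding y_def
    by (intro SupS_add SupS_sum SupS_scale SupS_axis P pr(1)) auto
  have psplit: "p = (\<Sum>t\<in>T \<inter> S0. p$t *\<^sub>R axis t 1) + (\<Sum>j\<in>T - S0. p$j *\<^sub>R axis j 1)"
    using SupS_repr[OF p] sum.Int_Diff[of T "\<lambda>t. p$t *\<^sub>R axis t 1" S0, OF finite] by (rule trans)
  have decomp: "axis i 1 - y = (\<Sum>j\<in>T - S0. p$j *\<^sub>R (axis j 1 - P j)) + (r - pr)"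
  proof -
    have "axis i 1 = p + r" by (simp add: r_def)
    then have "axis i 1 - y = (\<Sum>j\<in>T - S0. p$j *\<^sub>R axis j 1) - (\<Sum>j\<in>T - S0. p$j *\<^sub>R P j) + (r - pr)"
      by (subst (asm) psplit) (simp add: y_def algebra_simps)
    also have "(\<Sum>j\<in>T - S0. p$j *\<^sub>R axis j 1) - (\<Sum>j\<in>T - S0. p$j *\<^sub>R P j) = (\<Sum>j\<in>T - S0. p$j *\<^sub>R (axis j 1 - P j))"
      by (simp add: sum_subtractf scaleR_diff_right)
    finally show ?thesis .
  qed
  have "delta A (axis i 1) S0 \<le> q A (axis i 1 - y)" by (rule delta_le[OF A yS])
  also have "\<dots> \<le> 2 ^ card (T - S0) * ((\<Sum>j\<in>T - S0. q A (p$j *\<^sub>R (axis j 1 - P j))) + q A (r - pr))"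
    unfolding decomp by (rule q_sum_le[OF A]) simp
  also have "(\<Sum>j\<in>T - S0. q A (p$j *\<^sub>R (axis j 1 - P j))) = (\<Sum>j\<in>T - S0. (p$j)^2 * delta A (axis j 1) S0)"
    by (simp add: q_scale dj)
  also have "\<dots> + q A (r - pr) \<le> (\<Sum>j\<in>T - S0. (p$j)^2 * delta A (axis j 1) S0) + delta A (axis i 1) T"
    using dr dT by simp
  finally show ?thesis by simp
qed


lemma key:
  fixes A :: "real^'n^'n" and S T :: "'n set"
  assumes A: "pos_def_sym A" and iS: "i \<in> S" and iT: "i \<notin> T"
  shows "principal_minor A S * principal_minor A T \<le>
           (2 ^ card (T - S) * (real (card (T - S)) + 1)) * (principal_minor A (S - {i}) * principal_minor A (insert i T))
       \<or> (\<exists>j\<in>T - S. principal_minor A S * principal_minor A T \<le>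
           (2 ^ card (T - S) * (real (card (T - S)) + 1)) * (principal_minor A (insert j (S - {i})) * principal_minor A (insert i (T - {j}))))"
proof (rule ccontr)
  define a where "a = principal_minor A"
  define K :: real where "K = 2 ^ card (T - S) * (real (card (T - S)) + 1)"
  define S0 where "S0 = S - {i}"
  define m where "m = card (T - S)"
  have Kpos: "K > 0" by (simp add: K_def)
  have apos: "\<And>X. a X > 0" unfolding a_def using pm_pos[OF A] by blast
  have SS0: "S = insert i S0" "i \<notin> S0" using iS by (auto simp: S0_def)
  have TS0: "T - S0 = T - S" using iT by (auto simp: S0_def)
  assume "\<not> ?thesis"
  then have h0: "\<not> a S * a T \<le> K * (a S0 * a (insert i T))"
    and hj: "\<And>j. j \<in> T - S \<Longrightarrow> \<not> a S * a T \<le> K * (a (insert j S0) * a (insert i (T - {j})))"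
    unfolding a_def K_def S0_def by auto
  obtain p where p: "p \<in> SupS T" "\<forall>w\<in>SupS T. B A w (axis i 1 - p) = 0"
    using proj_exists[OF A finite] by blast
  define \<rho> where "\<rho> = delta A (axis i 1) S0"
  define \<alpha> where "\<alpha> = delta A (axis i 1) T"
  have aS: "a S = a S0 * \<rho>" unfolding a_def \<rho>_def SS0(1) using pm_insert[OF A SS0(2)] .
  have aTi: "a (insert i T) = a T * \<alpha>" unfolding a_def \<alpha>_def using pm_insert[OF A iT] .
  have r0: "K * \<alpha> < \<rho>"
  proof -
    have "a S0 * a T * (K * \<alpha>) < a S0 * a T * \<rho>"
      using h0 unfolding aS aTi by (simp add: algebra_simps)
    then show ?thesis using apos[of S0] apos[of T] by (simp add: mult_less_cancel_left_pos)
  qed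
  have rj: "K * ((p$j)^2 * delta A (axis j 1) S0) < \<rho>" if j: "j \<in> T - S" for j
  proof -
    have jT: "j \<in> T" and jS0: "j \<notin> S0" and ji: "j \<noteq> i" using j iT by (auto simp: S0_def)
    have Tj: "T = insert j (T - {j})" using jT by auto
    have aT: "a T = a (T - {j}) * delta A (axis j 1) (T - {j})"
      unfolding a_def by (subst Tj, rule pm_insert[OF A]) simp
    have aSj: "a (insert j S0) = a S0 * delta A (axis j 1) S0"
      unfolding a_def by (rule pm_insert[OF A jS0])
    have aTij: "a (insert i (T - {j})) = a (T - {j}) * delta A (axis i 1) (T - {j})"
      unfolding a_def by (rule pm_insert[OF A]) (use iT in simp)
    have c2: "(p$j)^2 * delta A (axis j 1) (T - {j}) \<le> delta A (axis i 1) (T - {j})"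
      by (rule claim2[OF A p jT])
    define P where "P = a S0 * a (T - {j}) * delta A (axis j 1) (T - {j})"
    have Ppos: "P > 0" unfolding P_def using apos delta_pos[OF A, of j "T - {j}"] by simp
    have dj0: "delta A (axis j 1) S0 \<ge> 0" by (rule delta_nonneg[OF A])
    have "P * (K * ((p$j)^2 * delta A (axis j 1) S0)) =
        K * a S0 * a (T - {j}) * delta A (axis j 1) S0 * ((p$j)^2 * delta A (axis j 1) (T - {j}))"
      unfolding P_def by (simp add: algebra_simps)
    also have "\<dots> \<le> K * a S0 * a (T - {j}) * delta A (axis j 1) S0 * delta A (axis i 1) (T - {j})"
      using c2 Kpos apos[of S0] apos[of "T - {j}"] dj0 by (intro mult_left_mono) (auto intro!: mult_nonneg_nonneg)
    also have "\<dots> = K * (a (insert j S0) * a (insert i (T - {j})))"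
      unfolding aSj aTij by (simp add: algebra_simps)
    also have "\<dots> < a S * a T" using hj[OF j] by simp
    also have "\<dots> = P * \<rho>" unfolding P_def aS aT by (simp add: algebra_simps)
    finally have "P * (K * ((p$j)^2 * delta A (axis j 1) S0)) < P * \<rho>" .
    then show ?thesis using Ppos by (simp add: mult_less_cancel_left_pos)
  qed
  have c1: "\<rho> \<le> 2 ^ m * ((\<Sum>j\<in>T - S. (p$j)^2 * delta A (axis j 1) S0) + \<alpha>)"
    using claim1[OF A p, of S0] unfolding \<rho>_def \<alpha>_def m_def TS0 .
  have sumle: "K * (\<Sum>j\<in>T - S. (p$j)^2 * delta A (axis j 1) S0) \<le> real m * \<rho>"
  proof -
    have "K * (\<Sum>j\<in>T - S. (p$j)^2 * delta A (axis j 1) S0) = (\<Sum>j\<in>T - S. K * ((p$j)^2 * delta A (axis j 1) S0))"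
      by (simp add: sum_distrib_left)
    also have "\<dots> \<le> (\<Sum>j\<in>T - S. \<rho>)" using rj by (intro sum_mono) (simp add: less_imp_le)
    also have "\<dots> = real m * \<rho>" by (simp add: m_def)
    finally show ?thesis .
  qed
  have "K * \<rho> \<le> 2 ^ m * (K * (\<Sum>j\<in>T - S. (p$j)^2 * delta A (axis j 1) S0) + K * \<alpha>)"
    using mult_left_mono[OF c1, of K] Kpos by (simp add: algebra_simps)
  also have "\<dots> < 2 ^ m * (real m * \<rho> + \<rho>)"
    using sumle r0 by (intro mult_strict_left_mono) auto
  also have "\<dots> = K * \<rho>" by (simp add: K_def m_def algebra_simps)
  finally show False by simp
qed

lemma log_contra:
  fixes t xs xt xu xv K fs ft fu fv e :: real
  assumes t: "t > 1" and pos: "xs > 0" "xt > 0" "xu > 0" "xv > 0" "K > 0"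
    and lK: "log t K < e"
    and a1: "\<bar>log t xs - fs\<bar> < e" and a2: "\<bar>log t xt - ft\<bar> < e"
    and a3: "\<bar>log t xu - fu\<bar> < e" and a4: "\<bar>log t xv - fv\<bar> < e"
    and ineq: "xs * xt \<le> K * (xu * xv)" and gap: "5 * e \<le> fs + ft - (fu + fv)"
  shows False
proof -
  have "log t (xs * xt) \<le> log t (K * (xu * xv))"
    using ineq pos t by simp
  then have "log t xs + log t xt \<le> log t K + (log t xu + log t xv)"
    using pos by (simp add: log_mult)
  then show False using lK a1 a2 a3 a4 gap by linarith
qed

theorem proposition2p1:
  shows "trop (PM_plus :: ('n::finite set \<Rightarrow> real) set) \<subseteq> {F. M_natural_concave F}"
proof
  fix F :: "'n set \<Rightarrow> real"
  assume F: "F \<in> trop PM_plus"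
  show "F \<in> {F. M_natural_concave F}"
    unfolding mem_Collect_eq M_natural_concave_def
  proof (intro allI ballI)
    fix S T :: "'n set" and i
    assume iST: "i \<in> S - T"
    show "F S + F T \<le> F (S - {i}) + F (T \<union> {i}) \<or>
        (\<exists>j\<in>T - S. F S + F T \<le> F (S - {i} \<union> {j}) + F (T - {j} \<union> {i}))"
    proof (rule ccontr)
      assume neg: "\<not> ?thesis"
      define g where "g = (\<lambda>j. F S + F T - (F (S - {i} \<union> {j}) + F (T - {j} \<union> {i})))"
      define g0 where "g0 = F S + F T - (F (S - {i}) + F (T \<union> {i}))"
      define G where "G = insert g0 (g ` (T - S))"
      have g0pos: "g0 > 0" using neg by (simp add: g0_def)
      have gpos: "g j > 0" if "j \<in> T - S" for j
      proof -
        have "\<not> (F S + F T \<le> F (S - {i} \<union> {j}) + F (T - {j} \<union> {i}))" using neg that by blast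
        then show ?thesis by (simp add: g_def)
      qed
      have finG: "finite G" by (simp add: G_def)
      define \<gamma> where "\<gamma> = Min G"
      have \<gamma>pos: "\<gamma> > 0" unfolding \<gamma>_def using finG g0pos gpos
        by (subst Min_gr_iff) (auto simp: G_def)
      have \<gamma>0: "\<gamma> \<le> g0" unfolding \<gamma>_def using finG by (simp add: G_def)
      have \<gamma>j: "\<gamma> \<le> g j" if "j \<in> T - S" for j unfolding \<gamma>_def using finG that by (simp add: G_def)
      define K :: real where "K = 2 ^ card (T - S) * (real (card (T - S)) + 1)"
      have Kpos: "K > 0" by (simp add: K_def)
      define T0 where "T0 = max 1 (exp (5 * ln K / \<gamma>))"
      obtain t x where t: "t > T0" and x: "x \<in> PM_plus" and close: "\<forall>a. \<bar>log t (x a) - F a\<bar> < \<gamma> / 5"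
      proof -
        have tr: "\<forall>\<epsilon>>0. \<forall>T. \<exists>t>T. \<exists>x\<in>PM_plus. \<forall>a. \<bar>log t (x a) - F a\<bar> < \<epsilon>"
          using F unfolding trop_def by simp
        have "\<gamma> / 5 > 0" using \<gamma>pos by simp
        from tr[rule_format, OF this, of T0] show ?thesis using that by blast
      qed
      obtain A where A: "pos_def_sym A" and xA: "x = (\<lambda>S. principal_minor A S)"
        using x unfolding PM_plus_def by blast
      have t1: "t > 1" using t by (simp add: T0_def)
      have "exp (5 * ln K / \<gamma>) < t" using t by (simp add: T0_def)
      then have "5 * ln K / \<gamma> < ln t" using t1 by (metis exp_less_cancel_iff exp_ln less_trans zero_less_one)
      then have "5 * ln K < \<gamma> * ln t" using \<gamma>pos by (simp add: divide_less_eq mult.commute)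
      moreover have "ln t > 0" using t1 by simp
      ultimately have lK: "log t K < \<gamma> / 5" by (simp add: log_def field_simps)
      have xpos: "\<And>X. x X > 0" unfolding xA using pm_pos[OF A] by blast
      have iS: "i \<in> S" and iT: "i \<notin> T" using iST by auto
      from key[OF A iS iT] show False
      proof
        assume h: "principal_minor A S * principal_minor A T \<le>
           (2 ^ card (T - S) * (real (card (T - S)) + 1)) * (principal_minor A (S - {i}) * principal_minor A (insert i T))"
        show False
          by (rule log_contra[OF t1 xpos xpos xpos xpos Kpos lK close[rule_format] close[rule_format]
                close[rule_format, of "S - {i}"] close[rule_format, of "insert i T"]])
            (use h \<gamma>0 in \<open>auto simp: xA K_def g0_def\<close>)
      next
        assume "\<exists>j\<in>T - S. principal_minor A S * principal_minor A T \<le>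
           (2 ^ card (T - S) * (real (card (T - S)) + 1)) * (principal_minor A (insert j (S - {i})) * principal_minor A (insert i (T - {j})))"
        then obtain j where j: "j \<in> T - S" and h: "principal_minor A S * principal_minor A T \<le>
           (2 ^ card (T - S) * (real (card (T - S)) + 1)) * (principal_minor A (insert j (S - {i})) * principal_minor A (insert i (T - {j})))"
          by blast
        show False
          by (rule log_contra[OF t1 xpos xpos xpos xpos Kpos lK close[rule_format] close[rule_format]
                close[rule_format, of "insert j (S - {i})"] close[rule_format, of "insert i (T - {j})"]])
            (use h \<gamma>j[OF j] in \<open>auto simp: xA K_def g_def\<close>)
      qed
    qed
  qed
qed

end
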